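(* Let $m\in\mathbb{N}$, let $\frac{m-1}{m}<\lambda\le\frac{m}{m+1}$, and let $f(x)=\lfloor\lambda x\rfloor$ for $x\in\mathbb{R}$, with $f^n$ its $n$-fold iterate. Then: - $\lim_{n\to\infty}f^n(x)=0$ for all $x\in[0,+\infty)$; - for each $k\in\{-1,-2,\dots,-m\}$, $\lim_{n\to\infty}f^n(x)=k$ for all $x\in\left[\frac{k}{\lambda},\frac{k+1}{\lambda}\right)$; - $\lim_{n\to\infty}f^n(x)=-m$ for all $x\in\left(-\infty,-\frac{m}{\lambda}\right)$.
   Context: $\lfloor x\rfloor=\max\{m\in\mathbb{Z}: m\le x\}$ denotes the floor function; $\mathbb{N}=\{1,2,\dots\}$. *)

theory Defs
  imports Complex_Main
begin

end

theory Submission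
  imports Defs
begin

lemma a1: fixes lam t::real assumes "lam*t > t - 1" "lam<1" "0 \<le> s" "s\<le>t" shows "lam*s > s - 1"
proof -
  have "(1-lam)*s \<le> (1-lam)*t" using assms by (intro mult_left_mono) auto
  thus ?thesis using assms by (simp add: algebra_simps)
qed
lemma a2: fixes lam t::real assumes "lam*t \<le> t - 1" "lam<1" "s\<ge>t" shows "lam*s \<le> s - 1"
proof -
  have "(1-lam)*s \<ge> (1-lam)*t" using assms by (intro mult_left_mono) auto
  thus ?thesis using assms by (simp add: algebra_simps)
qed

theorem theorem2:
  fixes m :: nat and lam :: real and f :: "real \<Rightarrow> real"
  assumes m: "m \<ge> 1"
    and lam_lo: "(real m - 1) / real m < lam"
    and lam_hi: "lam \<le> real m / (real m + 1)"
    and f_def: "\<And>x. f x = real_of_int \<lfloor>lam * x\<rfloor>"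
  shows "(\<forall>x::real. x \<ge> 0 \<longrightarrow> (\<lambda>n. (f ^^ n) x) \<longlonglongrightarrow> 0)
    \<and> (\<forall>k::int. - int m \<le> k \<and> k \<le> -1 \<longrightarrow>
         (\<forall>x::real. x \<in> {real_of_int k / lam ..< (real_of_int k + 1) / lam} \<longrightarrow>
            (\<lambda>n. (f ^^ n) x) \<longlonglongrightarrow> real_of_int k))
    \<and> (\<forall>x::real. x < - real m / lam \<longrightarrow> (\<lambda>n. (f ^^ n) x) \<longlonglongrightarrow> - real m)"
proof -
  have mpos: "real m > 0" using m by simp
  have L1: "lam * real m > real m - 1" using lam_lo mpos by (simp add: field_simps)
  have L2: "lam * (real m + 1) \<le> real m" using lam_hi mpos by (simp add: field_simps)
  have lpos: "lam > 0" using L1 m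
    by (smt (verit, ccfv_threshold) mpos mult_nonpos_nonneg of_nat_1 of_nat_le_iff)
  have llt: "lam < 1"
  proof (rule ccontr)
    assume "\<not> lam < 1"
    hence "lam * (real m + 1) \<ge> 1 * (real m + 1)" using mpos by (intro mult_right_mono) auto
    hence "real m + 1 \<le> lam * (real m + 1)" by (simp only: mult_1)
    thus False using L2 by linarith
  qed
  have L2': "lam * (real m + 1) \<le> (real m + 1) - 1" using L2 by simp
  have S: "(f ^^ Suc n) y = (f ^^ n) (f y)" for n y by (simp only: funpow_Suc_right o_apply)
  have A: "(f ^^ n) (real_of_int j) = 0" if "j \<ge> 0" "n \<ge> nat j" for n j
    using that
  proof (induction n arbitrary: j)
    case 0 then show ?case by simp
  next
    case (Suc n)
    define j' where "j' = \<lfloor>lam * real_of_int j\<rfloor>"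
    have fj: "f (real_of_int j) = real_of_int j'" by (simp add: f_def j'_def)
    have "lam * real_of_int j \<ge> 0" using Suc.prems lpos by simp
    hence j0: "j' \<ge> 0" by (simp add: j'_def)
    have "n \<ge> nat j'"
    proof (cases "j = 0")
      case True then show ?thesis by (simp add: j'_def)
    next
      case False
      hence "lam * real_of_int j < real_of_int j" using Suc.prems llt by simp
      hence "j' < j" unfolding j'_def by (simp add: floor_less_iff)
      then show ?thesis using Suc.prems j0 by linarith
    qed
    then show ?case using Suc.IH[OF j0] unfolding S fj by simp
  qed
  have Bf: "f (real_of_int j) = real_of_int j" if "- int m \<le> j" "j \<le> -1" for j
  proof -
    have s: "0 \<le> real_of_int (-j)" "real_of_int (-j) \<le> real m" using that by auto
    have "lam * real_of_int (-j) > real_of_int (-j) - 1" by (rule a1[OF L1 llt s])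
    hence u: "lam * real_of_int j < real_of_int j + 1" by simp
    have "lam * real_of_int (-j) \<le> real_of_int (-j)" using mult_right_mono[of lam 1 "real_of_int (-j)"] s llt
      by simp
    hence "lam * real_of_int j \<ge> real_of_int j" by simp
    hence "\<lfloor>lam * real_of_int j\<rfloor> = j" using u by (simp add: floor_eq_iff)
    then show ?thesis by (simp add: f_def)
  qed
  have B: "(f ^^ n) (real_of_int j) = real_of_int j" if "- int m \<le> j" "j \<le> -1" for n j
    by (induction n) (simp_all add: Bf[OF that])
  have C: "(f ^^ n) (real_of_int j) = - real m" if "j \<le> - int m" "n \<ge> nat (- int m - j)" for n j
    using that
  proof (induction n arbitrary: j)
    case 0 then show ?case using B[of "- int m" 0] by simp
  next
    case (Suc n)
    show ?case
    proof (cases "j = - int m")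
      case True then show ?thesis using B[of "- int m" "Suc n"] m by simp
    next
      case False
      define j' where "j' = \<lfloor>lam * real_of_int j\<rfloor>"
      have fj: "f (real_of_int j) = real_of_int j'" by (simp add: f_def j'_def)
      have s: "real_of_int (-j) \<ge> real m + 1" using Suc.prems False by simp
      have "lam * real_of_int (-j) \<le> real_of_int (-j) - 1" by (rule a2[OF L2' llt s])
      hence "lam * real_of_int j \<ge> real_of_int j + 1" by simp
      hence g1: "j' \<ge> j + 1" unfolding j'_def
        by (metis le_floor_iff of_int_1 of_int_add)
      have "lam * real_of_int (-j) \<ge> lam * (real m + 1)" using mult_left_mono[OF s, of lam] lpos
        by simp
      moreover have "lam * (real m + 1) > real m - 1" using L1 lpos by (simp add: algebra_simps)
      ultimately have "lam * real_of_int j < - real m + 1" by simp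
      hence "lam * real_of_int j < real_of_int (1 - int m)" by simp
      hence "j' < 1 - int m" unfolding j'_def by (simp only: floor_less_iff)
      hence g2: "j' \<le> - int m" by linarith
      have "n \<ge> nat (- int m - j')" using Suc.prems g1 by linarith
      then show ?thesis using Suc.IH[OF g2] unfolding S fj by simp
    qed
  qed
  have ev: "(\<lambda>n. (f ^^ n) x) \<longlonglongrightarrow> c" if "\<forall>n\<ge>N. (f ^^ n) x = c" for x c N
    by (rule tendsto_eventually) (use that in \<open>auto simp: eventually_sequentially\<close>)
  have P1: "(\<lambda>n. (f ^^ n) x) \<longlonglongrightarrow> 0" if "x \<ge> 0" for x
  proof -
    define j where "j = \<lfloor>lam * x\<rfloor>"
    have j0: "j \<ge> 0" using that lpos by (simp add: j_def)
    show ?thesis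
    proof (rule ev[where N="Suc (nat j)"], intro allI impI)
      fix n assume "n \<ge> Suc (nat j)"
      then obtain n' where n': "n = Suc n'" "n' \<ge> nat j" by (cases n) auto
      show "(f ^^ n) x = 0" using A[OF j0 n'(2)] unfolding n' S by (simp add: f_def j_def)
    qed
  qed
  have P2: "(\<lambda>n. (f ^^ n) x) \<longlonglongrightarrow> real_of_int k"
    if k: "- int m \<le> k" "k \<le> -1" and x: "x \<in> {real_of_int k / lam ..< (real_of_int k + 1) / lam}" for k x
  proof -
    have "real_of_int k \<le> lam * x" "lam * x < real_of_int k + 1"
      using x lpos by (auto simp: field_simps)
    hence fx: "f x = real_of_int k" by (simp add: f_def floor_eq_iff)
    show ?thesis
    proof (rule ev[where N=1], intro allI impI)
      fix n :: nat assume "n \<ge> 1"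
      then obtain n' where n': "n = Suc n'" by (cases n) auto
      show "(f ^^ n) x = real_of_int k" using B[OF k, of n'] unfolding n' S by (simp add: fx)
    qed
  qed
  have P3: "(\<lambda>n. (f ^^ n) x) \<longlonglongrightarrow> - real m" if "x < - real m / lam" for x
  proof -
    define j where "j = \<lfloor>lam * x\<rfloor>"
    have "lam * x < - real m" using that lpos by (simp add: field_simps)
    hence "lam * x < real_of_int (- int m)" by simp
    hence "j < - int m" unfolding j_def by (simp only: floor_less_iff)
    hence j0: "j \<le> - int m" by linarith
    show ?thesis
    proof (rule ev[where N="Suc (nat (- int m - j))"], intro allI impI)
      fix n assume "n \<ge> Suc (nat (- int m - j))"
      then obtain n' where n': "n = Suc n'" "n' \<ge> nat (- int m - j)" by (cases n) auto
      show "(f ^^ n) x = - real m" using C[OF j0 n'(2)] unfolding n' S by (simp add: f_def j_def)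
    qed
  qed
  show ?thesis using P1 P2 P3 by blast
qed

end
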